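(* Let $N\ge 1$. For all $p,q\in\mathcal P$ and every Pauli frame $B=\{(s_i,\tilde s_i)\}_{0\le i<N}$ on $N$ qubits, the relative support satisfies: (1) $\mathrm{Supp}(p,B)\ge 0$, and $\mathrm{Supp}(p,B)=0$ if and only if $p=I$ (the zero vector of $\mathcal P$); (2) $\mathrm{Supp}(p+q,B)\le \mathrm{Supp}(p,B)+\mathrm{Supp}(q,B)$; (3) $\mathrm{Supp}(p,\gamma\cdot B)=\mathrm{Supp}(p,B)$ for every $\gamma\in\bar E_N$ (acting by the backward action); (4) if $p\neq I$, then $\mathrm{Supp}(p,B)-1$ equals the minimum, over all vertices $[B']$ of the coarse-grained graph $[\mathrm{PFG}_N]$ such that some frame in the class $[B']$ has $p$ among its $2N$ entries, of the graph distance in $[\mathrm{PFG}_N]$ from $[B]$ to $[B']$.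
   Context: Pauli space: $\mathcal P$ is the set of $N$-qubit Pauli operators (tensor products of $I,X,Y,Z$) modulo overall phase; it is a $2N$-dimensional vector space over $\mathbb F_2$ with addition $p+q:=pq$ (mod phase) and zero element the identity $I$. The symplectic form $\lambda:\mathcal P\times\mathcal P\to\mathbb F_2$ is $\lambda(p,q)=0$ if $p,q$ commute and $1$ if they anticommute. A Pauli frame is an ordered tuple $B=\{(s_i,\tilde s_i)\}_{0\le i<N}$ of elements of $\mathcal P$ with $\lambda(s_i,s_j)=\lambda(\tilde s_i,\tilde s_j)=0$ and $\lambda(s_i,\tilde s_j)=\delta_{ij}$ for all $i,j$. The origin frame is $B_0=\{(Z_i,X_i)\}_i$. For a frame $B$ let $\phi_B:\mathcal P\to\mathcal P$ be the linear map with $\phi_B(Z_i)=s_i$, $\phi_B(X_i)=\tilde s_i$. The backward action of a Clifford unitary $V$ on a frame $B$ is $V\cdot B:=\{(\phi_B(V^\dagger Z_iV),\phi_B(V^\dagger X_iV))\}_i$ (conjugates taken modulo phase). Relative support: $\mathrm{Supp}(p,B)=\sum_i \big(\lambda(s_i,p)\vee\lambda(\tilde s_i,p)\big)\in\mathbb N$ ($\vee$ = logical OR, sum over integers). $\bar E_N$ is the group of actions on frames generated by the backward actions of $\mathrm{SWAP}_{ij}$, Hadamard $H_i$ and phase gate $P_i=R_Z(\pi/2)$ on qubit $i$, for all $i,j$. The equally entangled frame (EEF) class of $B$ is $[B]=\{\gamma\cdot B:\gamma\in\bar E_N\}$. The coarse-grained Pauli frame graph $[\mathrm{PFG}_N]$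 has the EEF classes as vertices, with $[B_1],[B_2]$ adjacent iff there are $B_1'\in[B_1]$, $B_2'\in[B_2]$ with $B_2'=\mathrm{CX}_{ij}\cdot B_1'$ for some qubits $i\ne j$; distances are unweighted graph distances. *)

theory Defs
  imports Main "HOL-Library.Extended_Nat"
begin

text \<open>N-qubit Pauli operators modulo phase, as vectors over F_2:
  a pair (x, z) of bit-functions on qubit indices; (x i, z i) = (0,0),(1,0),(1,1),(0,1)
  stand for I, X, Y, Z on qubit i.  Addition is pointwise xor (= product mod phase).\<close>

type_synonym pauli = "(nat \<Rightarrow> bool) \<times> (nat \<Rightarrow> bool)"

definition pauli_space :: "nat \<Rightarrow> pauli set" where
  "pauli_space N = {(x, z). \<forall>i\<ge>N. \<not> x i \<and> \<not> z i}"

definition pzero :: pauli where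
  "pzero = (\<lambda>_. False, \<lambda>_. False)"

definition padd :: "pauli \<Rightarrow> pauli \<Rightarrow> pauli" where
  "padd p q = (\<lambda>i. fst p i \<noteq> fst q i, \<lambda>i. snd p i \<noteq> snd q i)"

definition Zop :: "nat \<Rightarrow> pauli" where
  "Zop i = (\<lambda>_. False, \<lambda>k. k = i)"

definition Xop :: "nat \<Rightarrow> pauli" where
  "Xop i = (\<lambda>k. k = i, \<lambda>_. False)"

text \<open>Symplectic form: 1 iff anticommuting.\<close>
definition symp :: "nat \<Rightarrow> pauli \<Rightarrow> pauli \<Rightarrow> bool" where
  "symp N p q = odd (card {i. i < N \<and> ((fst p i \<and> snd q i) \<noteq> (snd p i \<and> fst q i))})"

text \<open>Pauli frames: B i = (s_i, s~_i) for i < N; padded with (I,I) beyond N.\<close>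
type_synonym frame = "nat \<Rightarrow> pauli \<times> pauli"

definition pauli_frame :: "nat \<Rightarrow> frame \<Rightarrow> bool" where
  "pauli_frame N B \<longleftrightarrow>
     (\<forall>i<N. fst (B i) \<in> pauli_space N \<and> snd (B i) \<in> pauli_space N) \<and>
     (\<forall>i<N. \<forall>j<N. \<not> symp N (fst (B i)) (fst (B j)) \<and> \<not> symp N (snd (B i)) (snd (B j)) \<and>
                    (symp N (fst (B i)) (snd (B j)) \<longleftrightarrow> i = j)) \<and>
     (\<forall>i\<ge>N. B i = (pzero, pzero))"

definition origin_frame :: "nat \<Rightarrow> frame" where
  "origin_frame N = (\<lambda>i. if i < N then (Zop i, Xop i) else (pzero, pzero))"

text \<open>The linear map phi_B with phi_B(Z_i) = s_i, phi_B(X_i) = s~_i.\<close>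
definition phi :: "nat \<Rightarrow> frame \<Rightarrow> pauli \<Rightarrow> pauli" where
  "phi N B p = foldr (\<lambda>i acc. padd (padd (if snd p i then fst (B i) else pzero)
                                         (if fst p i then snd (B i) else pzero)) acc)
                     [0..<N] pzero"

text \<open>Clifford gates and their conjugation action on Paulis modulo phase
  (V^dagger P V; for these gates this coincides mod phase with V P V^dagger).\<close>
datatype gate = SWAP nat nat | Had nat | Ph nat | CX nat nat

fun conj :: "gate \<Rightarrow> pauli \<Rightarrow> pauli" where
  "conj (SWAP i j) (x, z) = (x(i := x j, j := x i), z(i := z j, j := z i))"
| "conj (Had i) (x, z) = (x(i := z i), z(i := x i))"
| "conj (Ph i) (x, z) = (x, z(i := (z i \<noteq> x i)))"
| "conj (CX i j) (x, z) = (x(j := (x j \<noteq> x i)), z(i := (z i \<noteq> z j)))"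

definition back_act :: "nat \<Rightarrow> gate \<Rightarrow> frame \<Rightarrow> frame" where
  "back_act N g B = (\<lambda>i. if i < N then (phi N B (conj g (Zop i)), phi N B (conj g (Xop i)))
                          else (pzero, pzero))"

definition local_gates :: "nat \<Rightarrow> gate set" where
  "local_gates N = {SWAP i j | i j. i < N \<and> j < N} \<union> {Had i | i. i < N} \<union> {Ph i | i. i < N}"

text \<open>Elements of \<bar>E_N are represented by words in the generators (the generating
  actions are involutions mod phase, so words give the whole generated group).\<close>
definition act_word :: "nat \<Rightarrow> gate list \<Rightarrow> frame \<Rightarrow> frame" where
  "act_word N gs B = foldr (back_act N) gs B"

definition in_EN :: "nat \<Rightarrow> gate list \<Rightarrow> bool" where
  "in_EN N gs \<longleftrightarrow> set gs \<subseteq> local_gates N"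

definition eef_class :: "nat \<Rightarrow> frame \<Rightarrow> frame set" where
  "eef_class N B = {act_word N gs B | gs. in_EN N gs}"

definition supp :: "nat \<Rightarrow> pauli \<Rightarrow> frame \<Rightarrow> nat" where
  "supp N p B = card {i. i < N \<and> (symp N (fst (B i)) p \<or> symp N (snd (B i)) p)}"

definition cg_vertices :: "nat \<Rightarrow> frame set set" where
  "cg_vertices N = {eef_class N B | B. pauli_frame N B}"

definition cg_adj :: "nat \<Rightarrow> frame set \<Rightarrow> frame set \<Rightarrow> bool" where
  "cg_adj N C1 C2 \<longleftrightarrow> C1 \<in> cg_vertices N \<and> C2 \<in> cg_vertices N \<and>
     (\<exists>B1\<in>C1. \<exists>B2\<in>C2. \<exists>i<N. \<exists>j<N. i \<noteq> j \<and> B2 = back_act N (CX i j) B1)"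

text \<open>Unweighted graph distance (infinity if unreachable).\<close>
definition cg_dist :: "nat \<Rightarrow> frame set \<Rightarrow> frame set \<Rightarrow> enat" where
  "cg_dist N C1 C2 = (INF n \<in> {n. (cg_adj N ^^ n) C1 C2}. enat n)"

definition contains_pauli :: "nat \<Rightarrow> pauli \<Rightarrow> frame set \<Rightarrow> bool" where
  "contains_pauli N p C \<longleftrightarrow> (\<exists>B'\<in>C. \<exists>i<N. fst (B' i) = p \<or> snd (B' i) = p)"

end

theory Submission
  imports Defs
begin


lemma fst_padd[simp]: "fst (padd p q) i = (fst p i \<noteq> fst q i)" by (simp add: padd_def)
lemma snd_padd[simp]: "snd (padd p q) i = (snd p i \<noteq> snd q i)" by (simp add: padd_def)
lemma fst_pzero[simp]: "fst pzero i = False" by (simp add: pzero_def)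
lemma snd_pzero[simp]: "snd pzero i = False" by (simp add: pzero_def)

lemma pauli_eqI: "(\<And>i. fst p i = fst q i) \<Longrightarrow> (\<And>i. snd p i = snd q i) \<Longrightarrow> p = q"
  by (simp add: prod_eq_iff fun_eq_iff)

lemma padd_zero_right[simp]: "padd p pzero = p" by (rule pauli_eqI) auto
lemma padd_zero_left[simp]: "padd pzero p = p" by (rule pauli_eqI) auto
lemma padd_assoc: "padd (padd p q) r = padd p (padd q r)" by (rule pauli_eqI) auto
lemma padd_comm: "padd p q = padd q p" by (rule pauli_eqI) auto
lemma padd_self[simp]: "padd p p = pzero" by (rule pauli_eqI) auto

fun xpar :: "nat \<Rightarrow> (nat \<Rightarrow> bool) \<Rightarrow> bool" where
  "xpar 0 f = False"
| "xpar (Suc n) f = (xpar n f \<noteq> f n)"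

lemma odd_card_xpar: "odd (card {i. i < n \<and> f i}) = xpar n f"
proof (induction n)
  case 0 then show ?case by simp
next
  case (Suc n)
  have fin: "finite {i. i < n \<and> f i}" by simp
  show ?case
  proof (cases "f n")
    case True
    have "{i. i < Suc n \<and> f i} = insert n {i. i < n \<and> f i}"
      using True by (auto simp: less_Suc_eq)
    then show ?thesis using Suc fin True by simp
  next
    case False
    have "{i. i < Suc n \<and> f i} = {i. i < n \<and> f i}"
      using False by (auto simp: less_Suc_eq)
    then show ?thesis using Suc False by simp
  qed
qed

lemma xpar_cong: "(\<And>i. i < n \<Longrightarrow> f i = g i) \<Longrightarrow> xpar n f = xpar n g"
  by (induction n) auto

lemma xpar_xor: "xpar n (\<lambda>i. f i \<noteq> g i) = (xpar n f \<noteq> xpar n g)"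
  by (induction n) auto

lemma xpar_xor': "xpar n (\<lambda>i. f i = (\<not> g i)) = (xpar n f = (\<not> xpar n g))"
  using xpar_xor[of n f g] by simp

lemma xpar_False[simp]: "xpar n (\<lambda>_. False) = False"
  by (induction n) auto

lemma xpar_delta: "xpar n (\<lambda>i. i = k \<and> P i) = (k < n \<and> P k)"
  by (induction n) (auto simp: less_Suc_eq)

lemma symp_xpar: "symp N p q = xpar N (\<lambda>i. (fst p i \<and> snd q i) \<noteq> (snd p i \<and> fst q i))"
  unfolding symp_def odd_card_xpar ..

lemma symp_padd_left[simp]: "symp N (padd p p') q = (symp N p q \<noteq> symp N p' q)"
proof -
  have "symp N (padd p p') q = xpar N (\<lambda>i. ((fst p i \<and> snd q i) \<noteq> (snd p i \<and> fst q i)) \<noteq> ((fst p' i \<and> snd q i) \<noteq> (snd p' i \<and> fst q i)))"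
    unfolding symp_xpar by (rule xpar_cong) auto
  then show ?thesis unfolding xpar_xor symp_xpar .
qed

lemma symp_comm: "symp N p q = symp N q p"
  unfolding symp_xpar by (rule xpar_cong) auto

lemma symp_padd_right[simp]: "symp N q (padd p p') = (symp N q p \<noteq> symp N q p')"
  using symp_padd_left symp_comm by metis

lemma symp_self[simp]: "symp N p p = False"
  unfolding symp_xpar by (subst xpar_cong[where g="\<lambda>_. False"]) auto

lemma symp_zero[simp]: "symp N pzero q = False" "symp N q pzero = False"
  unfolding symp_xpar by (subst xpar_cong[where g="\<lambda>_. False"], auto)+

lemma symp_if[simp]: "symp N s (if b then x else pzero) = (b \<and> symp N s x)"
  "symp N (if b then x else pzero) s = (b \<and> symp N x s)" by auto

lemma frame_facts:
  assumes "pauli_frame N B" "i < N" "j < N"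
  shows "symp N (fst (B i)) (fst (B j)) = False" "symp N (snd (B i)) (snd (B j)) = False"
    "symp N (fst (B i)) (snd (B j)) = (i = j)" "symp N (snd (B i)) (fst (B j)) = (i = j)"
  using assms unfolding pauli_frame_def by (metis symp_comm)+

lemma frame_space: "pauli_frame N B \<Longrightarrow> i < N \<Longrightarrow> fst (B i) \<in> pauli_space N \<and> snd (B i) \<in> pauli_space N"
  unfolding pauli_frame_def by blast

lemma pauli_spaceD: "p \<in> pauli_space N \<Longrightarrow> N \<le> i \<Longrightarrow> fst p i = False \<and> snd p i = False"
  unfolding pauli_space_def by auto

lemma pauli_spaceI: "(\<And>i. N \<le> i \<Longrightarrow> fst p i = False \<and> snd p i = False) \<Longrightarrow> p \<in> pauli_space N"
  unfolding pauli_space_def by (cases p) auto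

lemma padd_space[simp]: "p \<in> pauli_space N \<Longrightarrow> q \<in> pauli_space N \<Longrightarrow> padd p q \<in> pauli_space N"
  by (rule pauli_spaceI) (auto dest: pauli_spaceD)

lemma pzero_space[simp]: "pzero \<in> pauli_space N"
  by (rule pauli_spaceI) auto

fun psum :: "(nat \<Rightarrow> pauli) \<Rightarrow> nat \<Rightarrow> pauli" where
  "psum t 0 = pzero"
| "psum t (Suc n) = padd (psum t n) (t n)"

lemma fst_psum[simp]: "fst (psum t n) k = xpar n (\<lambda>i. fst (t i) k)"
  by (induction n) auto
lemma snd_psum[simp]: "snd (psum t n) k = xpar n (\<lambda>i. snd (t i) k)"
  by (induction n) auto

lemma foldr_padd: "foldr (\<lambda>i acc. padd (t i) acc) xs a = padd (foldr (\<lambda>i acc. padd (t i) acc) xs pzero) a"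
proof (induction xs arbitrary: a)
  case Nil then show ?case by simp
next
  case (Cons x xs)
  have "foldr (\<lambda>i acc. padd (t i) acc) (x # xs) a = padd (t x) (padd (foldr (\<lambda>i acc. padd (t i) acc) xs pzero) a)"
    using Cons[of a] by simp
  also have "\<dots> = padd (foldr (\<lambda>i acc. padd (t i) acc) (x # xs) pzero) a"
    by (simp add: padd_assoc)
  finally show ?case .
qed

lemma foldr_psum: "foldr (\<lambda>i acc. padd (t i) acc) [0..<n] pzero = psum t n"
proof (induction n)
  case 0 then show ?case by simp
next
  case (Suc n)
  have "foldr (\<lambda>i acc. padd (t i) acc) [0..<Suc n] pzero = foldr (\<lambda>i acc. padd (t i) acc) [0..<n] (t n)"
    by simp
  also have "\<dots> = padd (psum t n) (t n)" using foldr_padd[of t "[0..<n]" "t n"] Suc by simp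
  finally show ?case by simp
qed

definition pterm :: "frame \<Rightarrow> pauli \<Rightarrow> nat \<Rightarrow> pauli" where
  "pterm B c i = padd (if snd c i then fst (B i) else pzero) (if fst c i then snd (B i) else pzero)"

lemma phi_psum: "phi N B c = psum (pterm B c) N"
  unfolding phi_def using foldr_psum[of "pterm B c" N] by (simp add: pterm_def)

lemma psum_cong: "(\<And>i. i < n \<Longrightarrow> t i = t' i) \<Longrightarrow> psum t n = psum t' n"
  by (induction n) auto

lemma psum_delta: "psum (\<lambda>i. if i = k then v else pzero) n = (if k < n then v else pzero)"
  by (induction n) (auto simp: less_Suc_eq)

lemma pterm_padd: "pterm B (padd c c') i = padd (pterm B c i) (pterm B c' i)"
  by (rule pauli_eqI) (auto simp: pterm_def)

lemma psum_padd: "psum (\<lambda>i. padd (f i) (g i)) n = padd (psum f n) (psum g n)"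
  by (rule pauli_eqI) (simp_all add: xpar_xor')

lemma phi_padd: "phi N B (padd c c') = padd (phi N B c) (phi N B c')"
  unfolding phi_psum pterm_padd psum_padd ..

lemma phi_zero[simp]: "phi N B pzero = pzero"
  unfolding phi_psum by (rule pauli_eqI) (simp_all add: pterm_def)

lemma phi_Z: "i < N \<Longrightarrow> phi N B (Zop i) = fst (B i)"
  unfolding phi_psum
  by (subst psum_cong[where t'="\<lambda>k. if k = i then fst (B i) else pzero"])
     (auto simp: pterm_def Zop_def psum_delta)

lemma phi_X: "i < N \<Longrightarrow> phi N B (Xop i) = snd (B i)"
  unfolding phi_psum
  by (subst psum_cong[where t'="\<lambda>k. if k = i then snd (B i) else pzero"])
     (auto simp: pterm_def Xop_def psum_delta)

lemma symp_psum: "symp N s (psum t n) = xpar n (\<lambda>i. symp N s (t i))"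
  by (induction n) auto

lemma symp_S_phi:
  assumes "pauli_frame N B" "k < N"
  shows "symp N (fst (B k)) (phi N B c) = fst c k"
proof -
  have "symp N (fst (B k)) (phi N B c) = xpar N (\<lambda>i. i = k \<and> fst c i)"
    unfolding phi_psum symp_psum
    by (rule xpar_cong) (auto simp: pterm_def frame_facts[OF assms(1)] assms(2))
  then show ?thesis using assms(2) by (simp add: xpar_delta)
qed

lemma symp_T_phi:
  assumes "pauli_frame N B" "k < N"
  shows "symp N (snd (B k)) (phi N B c) = snd c k"
proof -
  have "symp N (snd (B k)) (phi N B c) = xpar N (\<lambda>i. i = k \<and> snd c i)"
    unfolding phi_psum symp_psum
    by (rule xpar_cong) (auto simp: pterm_def frame_facts[OF assms(1)] assms(2))
  then show ?thesis using assms(2) by (simp add: xpar_delta)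
qed

lemma phi_space:
  assumes "pauli_frame N B"
  shows "phi N B c \<in> pauli_space N"
proof (rule pauli_spaceI)
  fix k assume k: "N \<le> k"
  have "fst (phi N B c) k = xpar N (\<lambda>_. False)" unfolding phi_psum fst_psum
    by (rule xpar_cong) (use frame_space[OF assms] k in \<open>auto simp: pterm_def dest: pauli_spaceD\<close>)
  moreover have "snd (phi N B c) k = xpar N (\<lambda>_. False)" unfolding phi_psum snd_psum
    by (rule xpar_cong) (use frame_space[OF assms] k in \<open>auto simp: pterm_def dest: pauli_spaceD\<close>)
  ultimately show "fst (phi N B c) k = False \<and> snd (phi N B c) k = False" by simp
qed

lemma finite_space: "finite (pauli_space N)"
proof -
  have "pauli_space N \<subseteq> (\<lambda>(A, C). ((\<lambda>i. i \<in> A), (\<lambda>i. i \<in> C))) ` (Pow {..<N} \<times> Pow {..<N})"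
  proof
    fix p assume p: "p \<in> pauli_space N"
    obtain x z where pxz: "p = (x, z)" by (cases p)
    have "({i. x i}, {i. z i}) \<in> Pow {..<N} \<times> Pow {..<N}"
      using p pxz unfolding pauli_space_def by (auto simp: not_less[symmetric])
    moreover have "p = (\<lambda>(A, C). ((\<lambda>i. i \<in> A), (\<lambda>i. i \<in> C))) ({i. x i}, {i. z i})"
      using pxz by simp
    ultimately show "p \<in> (\<lambda>(A, C). ((\<lambda>i. i \<in> A), (\<lambda>i. i \<in> C))) ` (Pow {..<N} \<times> Pow {..<N})"
      by blast
  qed
  then show ?thesis by (rule finite_subset) simp
qed

lemma phi_inj:
  assumes "pauli_frame N B"
  shows "inj_on (phi N B) (pauli_space N)"
proof (rule inj_onI)
  fix c c' assume c: "c \<in> pauli_space N" and c': "c' \<in> pauli_space N" and eq: "phi N B c = phi N B c'"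
  show "c = c'"
  proof (rule pauli_eqI)
    fix k show "fst c k = fst c' k"
    proof (cases "k < N")
      case True then show ?thesis using symp_S_phi[OF assms True, of c] symp_S_phi[OF assms True, of c'] eq by simp
    next
      case False then show ?thesis using c c' pauli_spaceD[OF c, of k] pauli_spaceD[OF c', of k] by simp
    qed
    show "snd c k = snd c' k"
    proof (cases "k < N")
      case True then show ?thesis using symp_T_phi[OF assms True, of c] symp_T_phi[OF assms True, of c'] eq by simp
    next
      case False then show ?thesis using c c' pauli_spaceD[OF c, of k] pauli_spaceD[OF c', of k] by simp
    qed
  qed
qed

lemma phi_surj:
  assumes "pauli_frame N B" "p \<in> pauli_space N"
  obtains c where "c \<in> pauli_space N" "p = phi N B c"
proof -
  have "phi N B ` pauli_space N = pauli_space N"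
    by (rule endo_inj_surj[OF finite_space]) (use phi_space[OF assms(1)] phi_inj[OF assms(1)] in auto)
  then show ?thesis using assms(2) that by blast
qed

lemma nondegenerate:
  assumes "pauli_frame N B" "p \<in> pauli_space N"
    and "\<And>k. k < N \<Longrightarrow> \<not> symp N (fst (B k)) p \<and> \<not> symp N (snd (B k)) p"
  shows "p = pzero"
proof -
  obtain c where c: "c \<in> pauli_space N" "p = phi N B c" using phi_surj[OF assms(1,2)] .
  have "c = pzero"
  proof (rule pauli_eqI)
    fix k show "fst c k = fst pzero k"
      using assms(3)[of k] symp_S_phi[OF assms(1), of k c] c pauli_spaceD[OF c(1), of k] by (cases "k < N") auto
    show "snd c k = snd pzero k"
      using assms(3)[of k] symp_T_phi[OF assms(1), of k c] c pauli_spaceD[OF c(1), of k] by (cases "k < N") auto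
  qed
  then show ?thesis using c by simp
qed



definition tau :: "nat \<Rightarrow> nat \<Rightarrow> nat \<Rightarrow> nat" where
  "tau a b i = (if i = a then b else if i = b then a else i)"

lemma conj_Had_Z: "conj (Had k) (Zop i) = (if i = k then Xop i else Zop i)"
  by (auto simp: Zop_def Xop_def fun_eq_iff)
lemma conj_Had_X: "conj (Had k) (Xop i) = (if i = k then Zop i else Xop i)"
  by (auto simp: Zop_def Xop_def fun_eq_iff)
lemma conj_Ph_Z: "conj (Ph k) (Zop i) = Zop i"
  by (auto simp: Zop_def Xop_def fun_eq_iff)
lemma conj_Ph_X: "conj (Ph k) (Xop i) = (if i = k then padd (Zop i) (Xop i) else Xop i)"
  by (auto simp: Zop_def Xop_def padd_def fun_eq_iff)
lemma conj_SWAP_Z: "conj (SWAP a b) (Zop i) = Zop (tau a b i)"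
  by (auto simp: Zop_def Xop_def tau_def fun_eq_iff)
lemma conj_SWAP_X: "conj (SWAP a b) (Xop i) = Xop (tau a b i)"
  by (auto simp: Zop_def Xop_def tau_def fun_eq_iff)
lemma conj_CX_Z: "a \<noteq> b \<Longrightarrow> conj (CX a b) (Zop i) = (if i = b then padd (Zop a) (Zop b) else Zop i)"
  by (auto simp: Zop_def Xop_def padd_def fun_eq_iff)
lemma conj_CX_X: "a \<noteq> b \<Longrightarrow> conj (CX a b) (Xop i) = (if i = a then padd (Xop a) (Xop b) else Xop i)"
  by (auto simp: Zop_def Xop_def padd_def fun_eq_iff)

lemma tau_less: "a < N \<Longrightarrow> b < N \<Longrightarrow> i < N \<Longrightarrow> tau a b i < N"
  by (simp add: tau_def)

lemma back_Had: "i < N \<Longrightarrow> back_act N (Had k) B i = (if i = k then (snd (B i), fst (B i)) else B i)"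
  by (simp add: back_act_def conj_Had_Z conj_Had_X phi_Z phi_X)
lemma back_Ph: "i < N \<Longrightarrow> back_act N (Ph k) B i = (fst (B i), if i = k then padd (fst (B i)) (snd (B i)) else snd (B i))"
  by (simp add: back_act_def conj_Ph_Z conj_Ph_X phi_Z phi_X phi_padd)
lemma back_SWAP: "i < N \<Longrightarrow> a < N \<Longrightarrow> b < N \<Longrightarrow> back_act N (SWAP a b) B i = B (tau a b i)"
  by (simp add: back_act_def conj_SWAP_Z conj_SWAP_X phi_Z phi_X tau_less)
lemma back_CX: "i < N \<Longrightarrow> a < N \<Longrightarrow> b < N \<Longrightarrow> a \<noteq> b \<Longrightarrow> back_act N (CX a b) B i =
   (if i = b then padd (fst (B a)) (fst (B b)) else fst (B i), if i = a then padd (snd (B a)) (snd (B b)) else snd (B i))"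
  by (simp add: back_act_def conj_CX_Z conj_CX_X phi_Z phi_X phi_padd)
lemma back_out: "\<not> i < N \<Longrightarrow> back_act N g B i = (pzero, pzero)"
  by (simp add: back_act_def)

definition sset :: "nat \<Rightarrow> pauli \<Rightarrow> frame \<Rightarrow> nat set" where
  "sset N p B = {i. i < N \<and> (symp N (fst (B i)) p \<or> symp N (snd (B i)) p)}"

lemma supp_sset: "supp N p B = card (sset N p B)"
  by (simp add: supp_def sset_def)

lemma finite_sset[simp]: "finite (sset N p B)"
  by (simp add: sset_def)

lemma local_gatesE:
  assumes "g \<in> local_gates N"
  obtains a b where "g = SWAP a b" "a < N" "b < N" | k where "g = Had k" "k < N" | k where "g = Ph k" "k < N"
  using assms unfolding local_gates_def by blast

lemma supp_local:
  assumes "g \<in> local_gates N"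
  shows "supp N p (back_act N g B) = supp N p B"
  using assms
proof (cases rule: local_gatesE)
  case (1 a b)
  have "sset N p (back_act N g B) = tau a b ` sset N p B"
  proof
    show "sset N p (back_act N g B) \<subseteq> tau a b ` sset N p B"
    proof
      fix i assume i: "i \<in> sset N p (back_act N g B)"
      then have "i < N" by (simp add: sset_def)
      then have "tau a b i \<in> sset N p B" using i 1 by (simp add: sset_def back_SWAP tau_less)
      moreover have "tau a b (tau a b i) = i" by (auto simp: tau_def)
      ultimately show "i \<in> tau a b ` sset N p B" by (metis image_eqI)
    qed
    show "tau a b ` sset N p B \<subseteq> sset N p (back_act N g B)"
    proof
      fix i assume "i \<in> tau a b ` sset N p B"
      then obtain j where j: "j \<in> sset N p B" "i = tau a b j" by blast
      then have "j < N" by (simp add: sset_def)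
      moreover have "tau a b (tau a b j) = j" by (auto simp: tau_def)
      ultimately show "i \<in> sset N p (back_act N g B)" using j 1
        by (simp add: sset_def back_SWAP tau_less)
    qed
  qed
  moreover have "inj_on (tau a b) (sset N p B)"
    by (rule inj_onI) (auto simp: tau_def split: if_splits)
  ultimately show ?thesis by (simp add: supp_sset card_image)
next
  case (2 k)
  have "sset N p (back_act N g B) = sset N p B"
    unfolding sset_def using 2 by (auto simp: back_Had split: if_splits)
  then show ?thesis by (simp add: supp_sset)
next
  case (3 k)
  have "sset N p (back_act N g B) = sset N p B"
    unfolding sset_def using 3 by (auto simp: back_Ph split: if_splits)
  then show ?thesis by (simp add: supp_sset)
qed

lemma act_word_Nil[simp]: "act_word N [] B = B" by (simp add: act_word_def)
lemma act_word_Cons[simp]: "act_word N (g # gs) B = back_act N g (act_word N gs B)" by (simp add: act_word_def)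
lemma act_word_append: "act_word N (xs @ ys) B = act_word N xs (act_word N ys B)" by (simp add: act_word_def)
lemma in_EN_Nil[simp]: "in_EN N []" by (simp add: in_EN_def)
lemma in_EN_Cons[simp]: "in_EN N (g # gs) = (g \<in> local_gates N \<and> in_EN N gs)" by (simp add: in_EN_def)
lemma in_EN_append[simp]: "in_EN N (xs @ ys) = (in_EN N xs \<and> in_EN N ys)" by (auto simp: in_EN_def)

lemma supp_word: "in_EN N gs \<Longrightarrow> supp N p (act_word N gs B) = supp N p B"
  by (induction gs) (auto simp: supp_local)

lemma frameI:
  assumes "\<And>i. i < N \<Longrightarrow> fst (B i) \<in> pauli_space N \<and> snd (B i) \<in> pauli_space N"
    and "\<And>i j. i < N \<Longrightarrow> j < N \<Longrightarrow> \<not> symp N (fst (B i)) (fst (B j)) \<and> \<not> symp N (snd (B i)) (snd (B j)) \<and>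
                    (symp N (fst (B i)) (snd (B j)) \<longleftrightarrow> i = j)"
    and "\<And>i. \<not> i < N \<Longrightarrow> B i = (pzero, pzero)"
  shows "pauli_frame N B"
  using assms unfolding pauli_frame_def by (auto simp: not_less[symmetric])

lemma frame_local:
  assumes fr: "pauli_frame N B" and g: "g \<in> local_gates N"
  shows "pauli_frame N (back_act N g B)"
  using g
proof (cases rule: local_gatesE)
  case (1 a b)
  have tt: "tau a b i = tau a b j \<longleftrightarrow> i = j" for i j by (auto simp: tau_def)
  show ?thesis
    by (rule frameI) (use 1 in \<open>auto simp: back_SWAP tau_less frame_space[OF fr] frame_facts[OF fr] tt back_out\<close>)
next
  case (2 k)
  show ?thesis
    by (rule frameI) (use 2 in \<open>auto simp: back_Had frame_space[OF fr] frame_facts[OF fr] back_out\<close>)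
next
  case (3 k)
  show ?thesis
    by (rule frameI) (use 3 in \<open>auto simp: back_Ph frame_space[OF fr] frame_facts[OF fr] back_out\<close>)
qed

lemma frame_CX:
  assumes fr: "pauli_frame N B" and "a < N" "b < N" "a \<noteq> b"
  shows "pauli_frame N (back_act N (CX a b) B)"
  by (rule frameI) (use assms in \<open>auto simp: back_CX frame_space[OF fr] frame_facts[OF fr] back_out\<close>)

lemma frame_word: "pauli_frame N B \<Longrightarrow> in_EN N gs \<Longrightarrow> pauli_frame N (act_word N gs B)"
  by (induction gs) (auto simp: frame_local)



lemma supp_CX_le:
  assumes "a < N" "b < N" "a \<noteq> b"
  shows "supp N p B \<le> Suc (supp N p (back_act N (CX a b) B))"
proof -
  let ?A = "sset N p B" and ?A' = "sset N p (back_act N (CX a b) B)"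
  have out: "k \<noteq> a \<Longrightarrow> k \<noteq> b \<Longrightarrow> (k \<in> ?A) = (k \<in> ?A')" for k
  proof (cases "k < N")
    case True
    assume "k \<noteq> a" "k \<noteq> b"
    then have "back_act N (CX a b) B k = B k" using assms True by (simp add: back_CX)
    then show ?thesis by (simp add: sset_def)
  qed (simp add: sset_def)
  have a1: "a \<in> ?A' \<longleftrightarrow> symp N (fst (B a)) p \<or> (symp N (snd (B a)) p \<noteq> symp N (snd (B b)) p)"
    using assms by (simp add: sset_def back_CX)
  have b1: "b \<in> ?A' \<longleftrightarrow> (symp N (fst (B a)) p \<noteq> symp N (fst (B b)) p) \<or> symp N (snd (B b)) p"
    using assms by (simp add: sset_def back_CX)
  have a0: "a \<in> ?A \<longleftrightarrow> symp N (fst (B a)) p \<or> symp N (snd (B a)) p"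
    using assms by (simp add: sset_def)
  have b0: "b \<in> ?A \<longleftrightarrow> symp N (fst (B b)) p \<or> symp N (snd (B b)) p"
    using assms by (simp add: sset_def)
  have bool: "(sa \<or> ta) \<or> (sb \<or> tb) \<Longrightarrow> (sa \<or> (ta \<noteq> tb)) \<or> ((sa \<noteq> sb) \<or> tb)"
    for sa ta sb tb :: bool by auto
  have ab: "a \<in> ?A \<or> b \<in> ?A \<Longrightarrow> a \<in> ?A' \<or> b \<in> ?A'"
    unfolding a0 b0 a1 b1 by (rule bool)
  obtain x where x: "?A \<subseteq> insert x ?A'"
  proof (cases "a \<in> ?A' \<or> b \<in> ?A'")
    case True
    then obtain y where y: "y \<in> {a, b}" "y \<in> ?A'" by blast
    define x where "x = (if y = a then b else a)"
    have "?A \<subseteq> insert x ?A'"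
    proof
      fix k assume k: "k \<in> ?A"
      show "k \<in> insert x ?A'"
      proof (cases "k = a \<or> k = b")
        case True then show ?thesis using y unfolding x_def by auto
      next
        case False then show ?thesis using out[of k] k by simp
      qed
    qed
    then show ?thesis by (rule that)
  next
    case False
    then have "a \<notin> ?A" "b \<notin> ?A" using ab by auto
    have "?A \<subseteq> insert a ?A'"
    proof
      fix k assume k: "k \<in> ?A"
      then have "k \<noteq> a" "k \<noteq> b" using \<open>a \<notin> ?A\<close> \<open>b \<notin> ?A\<close> by auto
      then show "k \<in> insert a ?A'" using out[of k] k by simp
    qed
    then show ?thesis by (rule that)
  qed
  have "card ?A \<le> card (insert x ?A')" by (rule card_mono) (use x in auto)
  also have "\<dots> \<le> Suc (card ?A')" by (simp add: card_insert_if)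
  finally show ?thesis by (simp add: supp_sset)
qed

lemma local_Had: "k < N \<Longrightarrow> Had k \<in> local_gates N" by (simp add: local_gates_def)
lemma local_Ph: "k < N \<Longrightarrow> Ph k \<in> local_gates N" by (simp add: local_gates_def)

lemma normalize:
  assumes fr: "pauli_frame N B" and k: "k < N" "k \<in> sset N p B"
  shows "\<exists>gs. in_EN N gs \<and> (\<forall>l<N. l \<noteq> k \<longrightarrow> act_word N gs B l = B l) \<and>
     symp N (fst (act_word N gs B k)) p \<and> \<not> symp N (snd (act_word N gs B k)) p"
proof -
  consider "symp N (fst (B k)) p" "\<not> symp N (snd (B k)) p" | "\<not> symp N (fst (B k)) p" "symp N (snd (B k)) p"
    | "symp N (fst (B k)) p" "symp N (snd (B k)) p"
    using k by (auto simp: sset_def)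
  then show ?thesis
  proof cases
    case 1 then show ?thesis by (intro exI[of _ "[]"]) simp
  next
    case 2 then show ?thesis using k by (intro exI[of _ "[Had k]"]) (simp add: local_Had back_Had)
  next
    case 3 then show ?thesis using k by (intro exI[of _ "[Ph k]"]) (simp add: local_Ph back_Ph)
  qed
qed

lemma reduce:
  assumes fr: "pauli_frame N B" and two: "2 \<le> supp N p B"
  shows "\<exists>gs a b. in_EN N gs \<and> a < N \<and> b < N \<and> a \<noteq> b \<and>
     Suc (supp N p (back_act N (CX a b) (act_word N gs B))) = supp N p B"
proof -
  let ?A = "sset N p B"
  have "?A \<noteq> {}" using two by (auto simp: supp_sset)
  then obtain a where a: "a \<in> ?A" by blast
  have "card (?A - {a}) \<ge> 1" using two a by (simp add: supp_sset)
  then have "?A - {a} \<noteq> {}" by (intro notI) simp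
  then obtain b where b: "b \<in> ?A" "b \<noteq> a" by blast
  have aN: "a < N" and bN: "b < N" using a b by (auto simp: sset_def)
  obtain gs1 where g1: "in_EN N gs1" "\<forall>l<N. l \<noteq> b \<longrightarrow> act_word N gs1 B l = B l"
    "symp N (fst (act_word N gs1 B b)) p" "\<not> symp N (snd (act_word N gs1 B b)) p"
    using normalize[OF fr bN b(1)] by blast
  define B1 where "B1 = act_word N gs1 B"
  have fr1: "pauli_frame N B1" using frame_word[OF fr g1(1)] by (simp add: B1_def)
  have "a \<in> sset N p B1" using a g1(2) aN b(2) by (auto simp: sset_def B1_def)
  then obtain gs2 where g2: "in_EN N gs2" "\<forall>l<N. l \<noteq> a \<longrightarrow> act_word N gs2 B1 l = B1 l"
    "symp N (fst (act_word N gs2 B1 a)) p" "\<not> symp N (snd (act_word N gs2 B1 a)) p"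
    using normalize[OF fr1 aN] by blast
  define B2 where "B2 = act_word N gs2 B1"
  have B2eq: "B2 = act_word N (gs2 @ gs1) B" by (simp add: B2_def B1_def act_word_append)
  have B2l: "l < N \<Longrightarrow> l \<noteq> a \<Longrightarrow> l \<noteq> b \<Longrightarrow> B2 l = B l" for l
    using g1(2) g2(2) by (simp add: B2_def B1_def)
  have B2b: "B2 b = B1 b" using g2(2) bN b(2) by (simp add: B2_def)
  have sa: "symp N (fst (B2 a)) p" "\<not> symp N (snd (B2 a)) p" using g2 by (simp_all add: B2_def)
  have sb: "symp N (fst (B2 b)) p" "\<not> symp N (snd (B2 b)) p" using g1 B2b by (simp_all add: B1_def)
  have eq: "sset N p (back_act N (CX a b) B2) = ?A - {b}"
  proof (rule set_eqI)
    fix l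
    show "l \<in> sset N p (back_act N (CX a b) B2) \<longleftrightarrow> l \<in> ?A - {b}"
    proof -
      have ab: "a \<noteq> b" using b(2) by simp
      consider "l = a" | "l = b" | "l \<noteq> a" "l \<noteq> b" by blast
      then show ?thesis
      proof cases
        case 1
        have "a \<in> sset N p (back_act N (CX a b) B2)"
          using aN bN ab sa by (simp add: sset_def back_CX)
        then show ?thesis using 1 a ab by simp
      next
        case 2
        have "b \<notin> sset N p (back_act N (CX a b) B2)"
          using aN bN ab sa sb by (simp add: sset_def back_CX)
        then show ?thesis using 2 by simp
      next
        case 3
        show ?thesis
        proof (cases "l < N")
          case True
          then have "back_act N (CX a b) B2 l = B l" using aN bN ab 3 B2l[of l] by (simp add: back_CX)
          then show ?thesis using 3 True by (simp add: sset_def)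
        next
          case False then show ?thesis by (simp add: sset_def)
        qed
      qed
    qed
  qed
  have "Suc (supp N p (back_act N (CX a b) B2)) = supp N p B"
    unfolding supp_sset eq using b(1) two by (simp add: supp_sset)
  then have "Suc (supp N p (back_act N (CX a b) (act_word N (gs2 @ gs1) B))) = supp N p B"
    by (simp only: B2eq)
  moreover have "in_EN N (gs2 @ gs1)" using g1(1) g2(1) by simp
  ultimately show ?thesis using aN bN b(2)
    by (intro exI[of _ "gs2 @ gs1"] exI[of _ a] exI[of _ b]) simp
qed

lemma self_in_eef: "B \<in> eef_class N B"
  unfolding eef_class_def by (auto intro: exI[of _ "[]"])

lemma base:
  assumes fr: "pauli_frame N B" and p: "p \<in> pauli_space N" and one: "supp N p B = 1"
  shows "contains_pauli N p (eef_class N B)"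
proof -
  obtain k where A: "sset N p B = {k}" using one by (auto simp: supp_sset card_1_singleton_iff)
  then have kN: "k < N" by (auto simp: sset_def)
  define sa where "sa = symp N (fst (B k)) p"
  define ta where "ta = symp N (snd (B k)) p"
  define q where "q = padd (if ta then fst (B k) else pzero) (if sa then snd (B k) else pzero)"
  have qsp: "q \<in> pauli_space N" using frame_space[OF fr kN] by (simp add: q_def)
  have "padd p q = pzero"
  proof (rule nondegenerate[OF fr])
    show "padd p q \<in> pauli_space N" using p qsp by simp
    fix l assume l: "l < N"
    show "\<not> symp N (fst (B l)) (padd p q) \<and> \<not> symp N (snd (B l)) (padd p q)"
    proof (cases "l = k")
      case True then show ?thesis using kN by (simp add: q_def frame_facts[OF fr] sa_def ta_def)
    next
      case False
      then have "l \<notin> sset N p B" using A by auto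
      then show ?thesis using False kN l by (simp add: q_def frame_facts[OF fr] sset_def)
    qed
  qed
  then have pq: "p = q" by (metis padd_assoc padd_self padd_zero_left padd_zero_right)
  have "sa \<or> ta" using A by (auto simp: sset_def sa_def ta_def)
  then consider "sa" "\<not> ta" | "\<not> sa" "ta" | "sa" "ta" by blast
  then show ?thesis
  proof cases
    case 1
    then have "snd (B k) = p" using pq by (simp add: q_def)
    then show ?thesis using kN self_in_eef[of B N] unfolding contains_pauli_def by blast
  next
    case 2
    then have "fst (B k) = p" using pq by (simp add: q_def)
    then show ?thesis using kN self_in_eef[of B N] unfolding contains_pauli_def by blast
  next
    case 3
    have "back_act N (Ph k) B \<in> eef_class N B"
      unfolding eef_class_def using kN local_Ph[OF kN]
      by (auto intro!: exI[of _ "[Ph k]"])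
    moreover have "snd (back_act N (Ph k) B k) = p" using 3 pq kN by (simp add: back_Ph q_def)
    ultimately show ?thesis using kN unfolding contains_pauli_def by blast
  qed
qed

lemma vertex_eef: "pauli_frame N B \<Longrightarrow> eef_class N B \<in> cg_vertices N"
  unfolding cg_vertices_def by blast

lemma word_in_eef: "in_EN N gs \<Longrightarrow> act_word N gs B \<in> eef_class N B"
  unfolding eef_class_def by blast

lemma upper:
  assumes p: "p \<in> pauli_space N"
  shows "pauli_frame N B \<Longrightarrow> supp N p B = Suc m \<Longrightarrow>
     \<exists>C. C \<in> cg_vertices N \<and> contains_pauli N p C \<and> (cg_adj N ^^ m) (eef_class N B) C"
proof (induction m arbitrary: B)
  case 0
  then show ?case using base[OF 0(1) p] vertex_eef[OF 0(1)] by auto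
next
  case (Suc m)
  obtain gs a b where r: "in_EN N gs" "a < N" "b < N" "a \<noteq> b"
     "Suc (supp N p (back_act N (CX a b) (act_word N gs B))) = supp N p B"
    using reduce[OF Suc(2), of p] Suc(3) by auto
  define B3 where "B3 = back_act N (CX a b) (act_word N gs B)"
  have fr3: "pauli_frame N B3" unfolding B3_def
    by (rule frame_CX[OF frame_word[OF Suc(2) r(1)] r(2,3,4)])
  have "supp N p B3 = Suc m" using r(5) Suc(3) by (simp add: B3_def)
  then obtain C where C: "C \<in> cg_vertices N" "contains_pauli N p C" "(cg_adj N ^^ m) (eef_class N B3) C"
    using Suc.IH[OF fr3] by blast
  have "cg_adj N (eef_class N B) (eef_class N B3)"
    unfolding cg_adj_def
  proof (intro conjI vertex_eef[OF Suc(2)] vertex_eef[OF fr3] bexI)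
    show "\<exists>i<N. \<exists>j<N. i \<noteq> j \<and> B3 = back_act N (CX i j) (act_word N gs B)"
      using r(2,3,4) B3_def by blast
  qed (use word_in_eef[OF r(1), of B] self_in_eef[of B3] in auto)
  then have "(cg_adj N ^^ Suc m) (eef_class N B) C" using C(3) by (rule relpowp_Suc_I2)
  then show ?case using C by blast
qed

lemma lower:
  "pauli_frame N B \<Longrightarrow> (cg_adj N ^^ n) (eef_class N B) C \<Longrightarrow> contains_pauli N p C \<Longrightarrow> supp N p B \<le> Suc n"
proof (induction n arbitrary: B)
  case 0
  then have "contains_pauli N p (eef_class N B)" by simp
  then obtain gs k where gs: "in_EN N gs" "k < N"
    "fst (act_word N gs B k) = p \<or> snd (act_word N gs B k) = p"
    unfolding contains_pauli_def eef_class_def by blast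
  define B' where "B' = act_word N gs B"
  have fr': "pauli_frame N B'" using frame_word[OF 0(1) gs(1)] by (simp add: B'_def)
  have "sset N p B' \<subseteq> {k}"
  proof
    fix l assume l: "l \<in> sset N p B'"
    then have lN: "l < N" by (simp add: sset_def)
    show "l \<in> {k}"
    proof (rule ccontr)
      assume "l \<notin> {k}"
      then have lk: "l \<noteq> k" by simp
      have "fst (B' k) = p \<or> snd (B' k) = p" using gs(3) by (simp add: B'_def)
      then have "\<not> symp N (fst (B' l)) p \<and> \<not> symp N (snd (B' l)) p"
        using frame_facts[OF fr' lN gs(2)] lk by auto
      then show False using l by (simp add: sset_def)
    qed
  qed
  then have "card (sset N p B') \<le> card {k}" by (rule card_mono[rotated]) simp
  then have "supp N p B' \<le> 1" by (simp add: supp_sset)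
  then show ?case using supp_word[OF gs(1), of p B] by (simp add: B'_def)
next
  case (Suc n)
  obtain C' where C': "cg_adj N (eef_class N B) C'" "(cg_adj N ^^ n) C' C"
    using relpowp_Suc_D2[OF Suc(3)] by blast
  obtain B0 where B0: "C' = eef_class N B0" "pauli_frame N B0"
    using C'(1) unfolding cg_adj_def cg_vertices_def by blast
  obtain B1 B2 a b where e: "B1 \<in> eef_class N B" "B2 \<in> C'" "a < N" "b < N" "a \<noteq> b"
    "B2 = back_act N (CX a b) B1"
    using C'(1) unfolding cg_adj_def by blast
  have ih: "supp N p B0 \<le> Suc n" using Suc.IH[OF B0(2)] C'(2) B0(1) Suc(4) by blast
  have "supp N p B2 = supp N p B0" using e(2) B0(1) supp_word unfolding eef_class_def by blast
  moreover have "supp N p B1 = supp N p B" using e(1) supp_word unfolding eef_class_def by blast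
  moreover have "supp N p B1 \<le> Suc (supp N p B2)" using supp_CX_le[OF e(3,4,5)] e(6) by blast
  ultimately show ?case using ih by simp
qed

theorem proposition1:
  fixes N :: nat and p q :: pauli and B :: frame
  assumes "N \<ge> 1"
    and "p \<in> pauli_space N" and "q \<in> pauli_space N"
    and "pauli_frame N B"
  shows "(0 \<le> supp N p B \<and> (supp N p B = 0 \<longleftrightarrow> p = pzero)) \<and>
         supp N (padd p q) B \<le> supp N p B + supp N q B \<and>
         (\<forall>gs. in_EN N gs \<longrightarrow> supp N p (act_word N gs B) = supp N p B) \<and>
         (p \<noteq> pzero \<longrightarrow>
           enat (supp N p B - 1) =
           (INF C \<in> {C \<in> cg_vertices N. contains_pauli N p C}. cg_dist N (eef_class N B) C))"
proof (intro conjI impI allI)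
  show "0 \<le> supp N p B" by simp
  show "supp N p B = 0 \<longleftrightarrow> p = pzero"
  proof
    assume "supp N p B = 0"
    then have "sset N p B = {}" by (simp add: supp_sset)
    then show "p = pzero" using nondegenerate[OF assms(4,2)] by (auto simp: sset_def)
  next
    assume "p = pzero"
    then show "supp N p B = 0" by (simp add: supp_def)
  qed
  have "sset N (padd p q) B \<subseteq> sset N p B \<union> sset N q B" by (auto simp: sset_def)
  then have "card (sset N (padd p q) B) \<le> card (sset N p B \<union> sset N q B)" by (rule card_mono[rotated]) simp
  also have "\<dots> \<le> card (sset N p B) + card (sset N q B)" by (rule card_Un_le)
  finally show "supp N (padd p q) B \<le> supp N p B + supp N q B" by (simp add: supp_sset)
  fix gs show "in_EN N gs \<Longrightarrow> supp N p (act_word N gs B) = supp N p B" by (rule supp_word)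
next
  assume np: "p \<noteq> pzero"
  have "supp N p B \<noteq> 0"
  proof
    assume "supp N p B = 0"
    then have "sset N p B = {}" by (simp add: supp_sset)
    then show False using nondegenerate[OF assms(4,2)] np by (auto simp: sset_def)
  qed
  then obtain m where m: "supp N p B = Suc m" using not0_implies_Suc by blast
  let ?S = "{C \<in> cg_vertices N. contains_pauli N p C}"
  obtain C0 where C0: "C0 \<in> cg_vertices N" "contains_pauli N p C0" "(cg_adj N ^^ m) (eef_class N B) C0"
    using upper[OF assms(2) assms(4) m] by blast
  have le1: "(INF C \<in> ?S. cg_dist N (eef_class N B) C) \<le> enat m"
  proof -
    have "cg_dist N (eef_class N B) C0 \<le> enat m"
      unfolding cg_dist_def by (rule INF_lower) (use C0(3) in simp)
    moreover have "C0 \<in> ?S" using C0 by simp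
    ultimately show ?thesis by (meson INF_lower order_trans)
  qed
  have le2: "enat m \<le> (INF C \<in> ?S. cg_dist N (eef_class N B) C)"
  proof (rule INF_greatest)
    fix C assume C: "C \<in> ?S"
    show "enat m \<le> cg_dist N (eef_class N B) C"
      unfolding cg_dist_def
    proof (rule INF_greatest)
      fix n assume "n \<in> {n. (cg_adj N ^^ n) (eef_class N B) C}"
      then have "supp N p B \<le> Suc n" using lower[OF assms(4)] C by blast
      then show "enat m \<le> enat n" using m by simp
    qed
  qed
  show "enat (supp N p B - 1) = (INF C \<in> ?S. cg_dist N (eef_class N B) C)"
    using le1 le2 m by simp
qed


end
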